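(* Let $K\in\mathbb{N}^*$. For every $p\in\mathbb{N}^*$ and every real-valued $\mu\in C_c^\infty(0,1)$, $$A^p_K(\mu)=\frac{(-1)^{p-1}}2\big\langle[\operatorname{ad}_A^{p-1}(\mu),\operatorname{ad}_A^p(\mu)]\varphi_1,\varphi_K\big\rangle.$$
   Context: $A=-d^2/dx^2$, acting on smooth functions on $[0,1]$; $\mu$ is identified with the multiplication operator $f\mapsto\mu f$; $[P,Q]=PQ-QP$, $\operatorname{ad}_A^0(\mu)=\mu$, $\operatorname{ad}_A^{k+1}(\mu)=[A,\operatorname{ad}_A^k(\mu)]$. $\varphi_j=\sqrt2\sin(j\pi x)$, $\lambda_j=(j\pi)^2$, $\langle f,g\rangle=\int_0^1f\bar g$, $c_j=\langle\mu\varphi_1,\varphi_j\rangle\langle\mu\varphi_K,\varphi_j\rangle$, and $A^p_K(\mu)=(-1)^{p-1}\sum_{j\ge1}(\lambda_j-\frac{\lambda_1+\lambda_K}2)(\lambda_K-\lambda_j)^{p-1}(\lambda_j-\lambda_1)^{p-1}c_j$ (absolutely convergent for such $\mu$). *)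

theory Defs
  imports "HOL-Analysis.Analysis"
begin

text \<open>Operators act on functions real => real (smooth functions on the line;
  all functions involved are smooth on R, and we only integrate over [0,1]).\<close>

definition lapA :: "(real \<Rightarrow> real) \<Rightarrow> (real \<Rightarrow> real)" where
  "lapA f = (\<lambda>x. - deriv (deriv f) x)"

definition mult_op :: "(real \<Rightarrow> real) \<Rightarrow> (real \<Rightarrow> real) \<Rightarrow> (real \<Rightarrow> real)" where
  "mult_op \<mu> f = (\<lambda>x. \<mu> x * f x)"

definition comm ::
  "((real \<Rightarrow> real) \<Rightarrow> (real \<Rightarrow> real)) \<Rightarrow> ((real \<Rightarrow> real) \<Rightarrow> (real \<Rightarrow> real))
    \<Rightarrow> (real \<Rightarrow> real) \<Rightarrow> (real \<Rightarrow> real)" where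
  "comm P Q = (\<lambda>f x. P (Q f) x - Q (P f) x)"

fun adA :: "nat \<Rightarrow> (real \<Rightarrow> real) \<Rightarrow> (real \<Rightarrow> real) \<Rightarrow> (real \<Rightarrow> real)" where
  "adA 0 \<mu> = mult_op \<mu>"
| "adA (Suc k) \<mu> = comm lapA (adA k \<mu>)"

definition phi :: "nat \<Rightarrow> real \<Rightarrow> real" where
  "phi j x = sqrt 2 * sin (real j * pi * x)"

definition lam :: "nat \<Rightarrow> real" where
  "lam j = (real j * pi)\<^sup>2"

definition inner01 :: "(real \<Rightarrow> real) \<Rightarrow> (real \<Rightarrow> real) \<Rightarrow> real" where
  "inner01 f g = integral {0..1} (\<lambda>x. f x * g x)"

definition coefc :: "(real \<Rightarrow> real) \<Rightarrow> nat \<Rightarrow> nat \<Rightarrow> real" where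
  "coefc \<mu> K j = inner01 (mult_op \<mu> (phi 1)) (phi j) * inner01 (mult_op \<mu> (phi K)) (phi j)"

definition AKp :: "nat \<Rightarrow> nat \<Rightarrow> (real \<Rightarrow> real) \<Rightarrow> real" where
  "AKp K p \<mu> = (-1) ^ (p - 1) *
     (\<Sum>i. let j = Suc i in
        (lam j - (lam 1 + lam K) / 2) * (lam K - lam j) ^ (p - 1) * (lam j - lam 1) ^ (p - 1)
        * coefc \<mu> K j)"

text \<open>Real-valued mu in C_c^infty(0,1), extended by zero to R: all iterated
  derivatives exist everywhere, and the support lies in a compact [a,b] within (0,1).\<close>
definition smooth_compact_01 :: "(real \<Rightarrow> real) \<Rightarrow> bool" where
  "smooth_compact_01 \<mu> \<longleftrightarrow>
     (\<forall>k x. ((deriv ^^ k) \<mu>) differentiable (at x)) \<and>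
     (\<exists>a b. 0 < a \<and> a \<le> b \<and> b < 1 \<and> (\<forall>x. x \<notin> {a..b} \<longrightarrow> \<mu> x = 0))"

end

theory Submission
  imports Defs
begin


coinductive smooth :: "(real \<Rightarrow> real) \<Rightarrow> bool" where
  sm: "(\<And>x. (f has_real_derivative f' x) (at x)) \<Longrightarrow> smooth f' \<Longrightarrow> smooth f"

lemma smooth_D:
  assumes "smooth f"
  shows "smooth (deriv f)" "\<And>x. (f has_real_derivative deriv f x) (at x)"
proof -
  from assms obtain f' where d: "\<And>x. (f has_real_derivative f' x) (at x)" and s: "smooth f'"
    by (cases rule: smooth.cases) auto
  have "deriv f = f'" using d by (auto intro!: ext DERIV_imp_deriv)
  then show "smooth (deriv f)" "\<And>x. (f has_real_derivative deriv f x) (at x)" using s d by auto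
qed

lemma smooth_cont: "smooth f \<Longrightarrow> continuous_on S f"
  by (meson DERIV_isCont continuous_at_imp_continuous_on smooth_D(2))

fun sp :: "((real \<Rightarrow> real) \<times> (real \<Rightarrow> real)) list \<Rightarrow> real \<Rightarrow> real" where
  "sp [] x = 0"
| "sp ((f,g)#ps) x = f x * g x + sp ps x"

fun spd :: "((real \<Rightarrow> real) \<times> (real \<Rightarrow> real)) list \<Rightarrow> ((real \<Rightarrow> real) \<times> (real \<Rightarrow> real)) list" where
  "spd [] = []"
| "spd ((f,g)#ps) = (deriv f, g) # (f, deriv g) # spd ps"

lemma sp_deriv:
  assumes "\<forall>(f,g)\<in>set ps. smooth f \<and> smooth g"
  shows "(sp ps has_real_derivative sp (spd ps) x) (at x)
     \<and> (\<forall>(f,g)\<in>set (spd ps). smooth f \<and> smooth g)"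
  using assms
proof (induction ps)
  case Nil
  then show ?case by (simp add: fun_eq_iff[symmetric])
next
  case (Cons fg ps)
  obtain f g where fg: "fg = (f,g)" by force
  have sf: "smooth f" "smooth g" using Cons.prems fg by auto
  have e: "sp ((f,g)#ps) = (\<lambda>x. f x * g x + sp ps x)" by (rule ext) simp
  have "((\<lambda>x. f x * g x + sp ps x) has_real_derivative
      (deriv f x * g x + f x * deriv g x) + sp (spd ps) x) (at x)"
    using Cons smooth_D[OF sf(1)] smooth_D[OF sf(2)]
    by (auto intro!: derivative_eq_intros)
  then show ?case using Cons smooth_D[OF sf(1)] smooth_D[OF sf(2)] sf fg e
    by (simp add: algebra_simps)
qed

lemma smooth_sp:
  assumes "\<forall>(f,g)\<in>set ps. smooth f \<and> smooth g"
  shows "smooth (sp ps)"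
proof -
  have "\<exists>ps. (\<forall>(f,g)\<in>set ps. smooth f \<and> smooth g) \<and> h = sp ps \<Longrightarrow> smooth h" for h
  proof (coinduction arbitrary: h rule: smooth.coinduct)
    case (smooth h)
    then obtain ps where ps: "\<forall>(f,g)\<in>set ps. smooth f \<and> smooth g" "h = sp ps" by blast
    show ?case
      using sp_deriv[OF ps(1)] ps(2) by blast
  qed
  then show ?thesis using assms by blast
qed

lemma smooth_const: "smooth (\<lambda>x. c)"
proof -
  have "\<exists>c. h = (\<lambda>x. c) \<Longrightarrow> smooth h" for h
  proof (coinduction arbitrary: h rule: smooth.coinduct)
    case (smooth h)
    then obtain c where "h = (\<lambda>x. c)" by blast
    then show ?case by (auto intro!: exI[of _ "\<lambda>x. 0"] derivative_eq_intros)
  qed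
  then show ?thesis by blast
qed

lemma smooth_mult: "smooth f \<Longrightarrow> smooth g \<Longrightarrow> smooth (\<lambda>x. f x * g x)"
proof -
  have "sp [(f,g)] = (\<lambda>x. f x * g x)" by (rule ext) simp
  then show "smooth f \<Longrightarrow> smooth g \<Longrightarrow> ?thesis" using smooth_sp[of "[(f,g)]"] by (simp add: smooth_const)
qed

lemma smooth_add: "smooth f \<Longrightarrow> smooth g \<Longrightarrow> smooth (\<lambda>x. f x + g x)"
proof -
  have "sp [(f,\<lambda>x. 1),(g,\<lambda>x. 1)] = (\<lambda>x. f x + g x)" by (rule ext) simp
  then show "smooth f \<Longrightarrow> smooth g \<Longrightarrow> ?thesis" using smooth_sp[of "[(f,\<lambda>x. 1),(g,\<lambda>x. 1)]"] by (simp add: smooth_const)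
qed

lemma smooth_cmult: "smooth f \<Longrightarrow> smooth (\<lambda>x. c * f x)"
  using smooth_mult[OF smooth_const] by blast

lemma smooth_diff: "smooth f \<Longrightarrow> smooth g \<Longrightarrow> smooth (\<lambda>x. f x - g x)"
  using smooth_add[of f "\<lambda>x. (-1) * g x"] smooth_cmult[of g "-1"] by simp

lemma smooth_lapA: "smooth f \<Longrightarrow> smooth (lapA f)"
  unfolding lapA_def using smooth_cmult[of "deriv (deriv f)" "-1"] smooth_D by simp

lemma smooth_mu:
  assumes "smooth_compact_01 \<mu>" shows "smooth \<mu>"
proof -
  have d: "\<And>k x. ((deriv ^^ k) \<mu>) differentiable (at x)" using assms
    unfolding smooth_compact_01_def by blast
  have "\<exists>k. h = (deriv ^^ k) \<mu> \<Longrightarrow> smooth h" for h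
  proof (coinduction arbitrary: h rule: smooth.coinduct)
    case (smooth h)
    then obtain k where k: "h = (deriv ^^ k) \<mu>" by blast
    have "(h has_real_derivative (deriv ^^ Suc k) \<mu> x) (at x)" for x
      using d[of k] k by (simp add: DERIV_deriv_iff_real_differentiable)
    then show ?case by blast
  qed
  then show ?thesis by (metis funpow_0)
qed

lemma smooth_sin: "smooth (\<lambda>x. c * sin (b * x + a))"
proof -
  have "\<exists>c b a. h = (\<lambda>x. c * sin (b * x + a)) \<Longrightarrow> smooth h" for h
  proof (coinduction arbitrary: h rule: smooth.coinduct)
    case (smooth h)
    then obtain c b a where k: "h = (\<lambda>x. c * sin (b * x + a))" by blast
    have "(h has_real_derivative (c * b) * sin (b * x + (a + pi/2))) (at x)" for x
      unfolding k by (auto intro!: derivative_eq_intros simp: sin_add cos_add algebra_simps)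
    then show ?case by (intro exI[of _ h] exI[of _ "\<lambda>x. (c * b) * sin (b * x + (a + pi/2))"]) blast
  qed
  then show ?thesis by blast
qed

lemma smooth_phi: "smooth (phi j)"
  using smooth_sin[of "sqrt 2" "real j * pi" 0] unfolding phi_def by (simp add: mult.assoc)

lemma vanish_deriv:
  assumes "smooth f" "\<And>x. x \<notin> {a..b} \<Longrightarrow> f x = 0" "x \<notin> {a..b}"
  shows "deriv f x = 0"
proof -
  have D: "(f has_real_derivative deriv f x) (at x)" using smooth_D(2)[OF assms(1)] .
  show ?thesis
  proof (cases "x < a")
    case True
    show ?thesis
    proof (rule DERIV_local_const[OF D, of "a - x"])
      show "0 < a - x" using True by simp
      show "\<forall>y. \<bar>x - y\<bar> < a - x \<longrightarrow> f x = f y"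
      proof (intro allI impI)
        fix y assume "\<bar>x - y\<bar> < a - x"
        then have "y < a" by (simp add: abs_less_iff)
        then show "f x = f y" using assms(2) True by simp
      qed
    qed
  next
    case False
    then have "x > b" using assms(3) by auto
    show ?thesis
    proof (rule DERIV_local_const[OF D, of "x - b"])
      show "0 < x - b" using \<open>x > b\<close> by simp
      show "\<forall>y. \<bar>x - y\<bar> < x - b \<longrightarrow> f x = f y"
      proof (intro allI impI)
        fix y assume "\<bar>x - y\<bar> < x - b"
        then have "y > b" by (simp add: abs_less_iff)
        then show "f x = f y" using assms(2) \<open>x > b\<close> by simp
      qed
    qed
  qed
qed

lemma adA_props:
  assumes "smooth \<mu>" "\<And>x. x \<notin> {a..b} \<Longrightarrow> \<mu> x = 0"
  shows "smooth f \<Longrightarrow> smooth (adA k \<mu> f) \<and> (\<forall>x. x \<notin> {a..b} \<longrightarrow> adA k \<mu> f x = 0)"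
proof (induction k arbitrary: f)
  case 0
  then show ?case using assms by (auto simp: mult_op_def intro!: smooth_mult)
next
  case (Suc k)
  have e: "adA (Suc k) \<mu> f = (\<lambda>x. lapA (adA k \<mu> f) x - adA k \<mu> (lapA f) x)"
    by (simp add: comm_def)
  have s1: "smooth (adA k \<mu> f)" "\<forall>x. x \<notin> {a..b} \<longrightarrow> adA k \<mu> f x = 0" using Suc by auto
  have s2: "smooth (adA k \<mu> (lapA f))" "\<forall>x. x \<notin> {a..b} \<longrightarrow> adA k \<mu> (lapA f) x = 0"
    using Suc.IH[of "lapA f"] smooth_lapA[OF Suc.prems] by auto
  have v1: "x \<notin> {a..b} \<Longrightarrow> deriv (adA k \<mu> f) x = 0" for x
    using vanish_deriv[OF s1(1)] s1(2) by blast
  have v2: "x \<notin> {a..b} \<Longrightarrow> deriv (deriv (adA k \<mu> f)) x = 0" for x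
    using vanish_deriv[OF smooth_D(1)[OF s1(1)] v1] by blast
  show ?case unfolding e
    using smooth_diff[OF smooth_lapA[OF s1(1)] s2(1)] v2 s2(2) by (auto simp: lapA_def)
qed

lemma inner01_diff_left:
  "smooth f \<Longrightarrow> smooth g \<Longrightarrow> smooth h \<Longrightarrow> inner01 (\<lambda>x. f x - g x) h = inner01 f h - inner01 g h"
  unfolding inner01_def left_diff_distrib
  by (intro integral_diff integrable_continuous_interval continuous_intros; rule smooth_cont; assumption)

lemma inner01_diff_right:
  "smooth f \<Longrightarrow> smooth g \<Longrightarrow> smooth h \<Longrightarrow> inner01 h (\<lambda>x. f x - g x) = inner01 h f - inner01 h g"
  unfolding inner01_def right_diff_distrib
  by (intro integral_diff integrable_continuous_interval continuous_intros; rule smooth_cont; assumption)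

lemma inner01_commute: "inner01 f g = inner01 g f"
  unfolding inner01_def by (simp add: mult.commute)

lemma inner01_scale_right: "inner01 f (\<lambda>x. c * g x) = c * inner01 f g"
  unfolding inner01_def by (simp add: mult.left_commute)

lemma inner01_scale_left: "inner01 (\<lambda>x. c * f x) g = c * inner01 f g"
  unfolding inner01_def by (simp add: mult.assoc)

lemma ibp:
  assumes u: "smooth u" and h: "smooth h" and v: "\<And>x. x \<notin> {a..b} \<Longrightarrow> u x = 0"
    and ab: "0 < a" "b < 1"
  shows "inner01 (lapA u) h = inner01 u (lapA h)"
proof -
  define F where "F x = deriv u x * h x - u x * deriv h x" for x
  have du: "\<And>x. x \<notin> {a..b} \<Longrightarrow> deriv u x = 0" using vanish_deriv[OF u v] by blast
  have su: "smooth (deriv u)" "smooth (deriv (deriv u))" using smooth_D(1) u by blast+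
  have sh: "smooth (deriv h)" "smooth (deriv (deriv h))" using smooth_D(1) h by blast+
  have "((\<lambda>x. deriv (deriv u) x * h x - u x * deriv (deriv h) x) has_integral F 1 - F 0) {0..1}"
  proof (rule fundamental_theorem_of_calculus)
    fix x :: real
    have "(F has_real_derivative deriv (deriv u) x * h x - u x * deriv (deriv h) x) (at x)"
    proof -
      have "(F has_real_derivative (deriv (deriv u) x * h x + deriv h x * deriv u x)
              - (deriv u x * deriv h x + deriv (deriv h) x * u x)) (at x)"
        unfolding F_def[abs_def]
        by (intro DERIV_diff DERIV_mult smooth_D(2) u h su sh)
      then show ?thesis by (simp add: algebra_simps)
    qed
    then show "(F has_vector_derivative deriv (deriv u) x * h x - u x * deriv (deriv h) x) (at x within {0..1})"
      by (simp add: has_real_derivative_iff_has_vector_derivative has_vector_derivative_at_within)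
  qed simp
  moreover have "F 1 = 0" "F 0 = 0" using ab v du by (auto simp: F_def)
  ultimately have I: "integral {0..1} (\<lambda>x. deriv (deriv u) x * h x - u x * deriv (deriv h) x) = 0"
    by (simp add: integral_unique)
  have iu: "(\<lambda>x. deriv (deriv u) x * h x) integrable_on {0..1}"
    by (intro integrable_continuous_interval continuous_on_mult smooth_cont su h)
  have ih: "(\<lambda>x. u x * deriv (deriv h) x) integrable_on {0..1}"
    by (intro integrable_continuous_interval continuous_on_mult smooth_cont sh u)
  have E: "inner01 (deriv (deriv u)) h = inner01 u (deriv (deriv h))"
    using I integral_diff[OF iu ih] unfolding inner01_def by simp
  have L1: "(\<lambda>x. lapA u x * h x) = (\<lambda>x. - (deriv (deriv u) x * h x))"
    unfolding lapA_def by simp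
  have L2: "(\<lambda>x. u x * lapA h x) = (\<lambda>x. - (u x * deriv (deriv h) x))"
    unfolding lapA_def by simp
  have "inner01 (lapA u) h = - inner01 (deriv (deriv u)) h"
    unfolding inner01_def L1 by (rule integral_neg)
  also have "\<dots> = - inner01 u (deriv (deriv h))" by (simp only: E)
  also have "\<dots> = inner01 u (lapA h)"
    unfolding inner01_def L2 by (rule integral_neg[symmetric])
  finally show ?thesis .
qed

lemma deriv_phi: "deriv (phi j) = (\<lambda>x. sqrt 2 * (real j * pi) * cos (real j * pi * x))"
proof
  fix x
  show "deriv (phi j) x = sqrt 2 * (real j * pi) * cos (real j * pi * x)"
    unfolding phi_def[abs_def]
    by (rule DERIV_imp_deriv) (auto intro!: derivative_eq_intros)
qed

lemma lapA_phi: "lapA (phi j) = (\<lambda>x. lam j * phi j x)"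
proof
  fix x
  have "deriv (\<lambda>x. sqrt 2 * (real j * pi) * cos (real j * pi * x)) x
      = - sqrt 2 * (real j * pi) * (real j * pi) * sin (real j * pi * x)"
    by (rule DERIV_imp_deriv) (auto intro!: derivative_eq_intros)
  then show "lapA (phi j) x = lam j * phi j x"
    unfolding lapA_def deriv_phi by (simp add: lam_def phi_def power2_eq_square)
qed

locale mu_ctx =
  fixes \<mu> :: "real \<Rightarrow> real" and a b :: real
  assumes S: "smooth \<mu>" and V: "\<And>x. x \<notin> {a..b} \<Longrightarrow> \<mu> x = 0"
    and ab: "0 < a" "b < 1"
begin

lemma adS: "smooth f \<Longrightarrow> smooth (adA k \<mu> f)"
  using adA_props[OF S V] by blast

lemma adV: "smooth f \<Longrightarrow> x \<notin> {a..b} \<Longrightarrow> adA k \<mu> f x = 0"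
  using adA_props[OF S V] by blast

lemma adjoint:
  "smooth f \<Longrightarrow> smooth g \<Longrightarrow> inner01 (adA k \<mu> f) g = (-1)^k * inner01 f (adA k \<mu> g)"
proof (induction k arbitrary: f g)
  case 0
  then show ?case by (simp add: inner01_def mult_op_def mult.assoc mult.left_commute)
next
  case (Suc k)
  let ?W = "adA k \<mu>"
  have sf: "smooth f" "smooth g" by fact+
  have e: "\<And>h. adA (Suc k) \<mu> h = (\<lambda>x. lapA (?W h) x - ?W (lapA h) x)"
    by (simp add: comm_def)
  have 1: "inner01 (lapA (?W f)) g = (-1)^k * inner01 f (?W (lapA g))"
    using ibp[OF adS[OF sf(1)] sf(2) adV[OF sf(1)] ab] Suc.IH[OF sf(1) smooth_lapA[OF sf(2)]] by (rule trans)
  have "inner01 (?W (lapA f)) g = (-1)^k * inner01 (lapA f) (?W g)"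
    by (rule Suc.IH[OF smooth_lapA[OF sf(1)] sf(2)])
  also have "inner01 (lapA f) (?W g) = inner01 (?W g) (lapA f)" by (rule inner01_commute)
  also have "\<dots> = inner01 (lapA (?W g)) f"
    by (rule ibp[OF adS[OF sf(2)] sf(1) adV[OF sf(2)] ab, symmetric])
  also have "\<dots> = inner01 f (lapA (?W g))" by (rule inner01_commute)
  finally have 2: "inner01 (?W (lapA f)) g = (-1)^k * inner01 f (lapA (?W g))" .
  have "inner01 (adA (Suc k) \<mu> f) g = inner01 (lapA (?W f)) g - inner01 (?W (lapA f)) g"
    unfolding e by (rule inner01_diff_left) (auto intro: smooth_lapA adS sf)
  also have "\<dots> = (-1)^Suc k * (inner01 f (lapA (?W g)) - inner01 f (?W (lapA g)))"
    using 1 2 by (simp add: algebra_simps)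
  also have "\<dots> = (-1)^Suc k * inner01 f (adA (Suc k) \<mu> g)"
    unfolding e by (subst inner01_diff_right) (auto intro: smooth_lapA adS sf)
  finally show ?case .
qed

lemma matrix:
  "inner01 (adA k \<mu> (phi i)) (phi j) = (lam j - lam i)^k * inner01 (mult_op \<mu> (phi i)) (phi j)"
proof (induction k)
  case 0
  then show ?case by simp
next
  case (Suc k)
  let ?W = "adA k \<mu>"
  have sp: "smooth (phi i)" "smooth (phi j)" by (rule smooth_phi)+
  have e: "adA (Suc k) \<mu> (phi i) = (\<lambda>x. lapA (?W (phi i)) x - ?W (lapA (phi i)) x)"
    by (simp add: comm_def)
  have "inner01 (lapA (?W (phi i))) (phi j) = inner01 (?W (phi i)) (lapA (phi j))"
    by (rule ibp[OF adS[OF sp(1)] sp(2) adV[OF sp(1)] ab])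
  also have "\<dots> = lam j * inner01 (?W (phi i)) (phi j)"
    unfolding lapA_phi by (rule inner01_scale_right)
  finally have 1: "inner01 (lapA (?W (phi i))) (phi j) = lam j * inner01 (?W (phi i)) (phi j)" .
  have sl: "smooth (\<lambda>x. lam i * phi i x)" by (rule smooth_cmult[OF sp(1)])
  have "inner01 (?W (lapA (phi i))) (phi j) = (-1)^k * inner01 (\<lambda>x. lam i * phi i x) (?W (phi j))"
    unfolding lapA_phi by (rule adjoint[OF sl sp(2)])
  also have "\<dots> = lam i * ((-1)^k * inner01 (phi i) (?W (phi j)))"
    unfolding inner01_scale_left by (rule mult.left_commute)
  also have "(-1)^k * inner01 (phi i) (?W (phi j)) = inner01 (?W (phi i)) (phi j)"
    by (rule adjoint[OF sp, symmetric])
  finally have 2: "inner01 (?W (lapA (phi i))) (phi j) = lam i * inner01 (?W (phi i)) (phi j)" .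
  have "inner01 (adA (Suc k) \<mu> (phi i)) (phi j)
      = inner01 (lapA (?W (phi i))) (phi j) - inner01 (?W (lapA (phi i))) (phi j)"
    unfolding e by (rule inner01_diff_left) (auto intro: smooth_lapA adS sp)
  also have "\<dots> = (lam j - lam i) * inner01 (?W (phi i)) (phi j)"
    unfolding 1 2 by (rule left_diff_distrib[symmetric])
  also have "\<dots> = (lam j - lam i) * ((lam j - lam i)^k * inner01 (mult_op \<mu> (phi i)) (phi j))"
    unfolding Suc ..
  finally show ?case by simp
qed

end




lemma int_cos:
  fixes c :: real
  assumes "c \<noteq> 0"
  shows "((\<lambda>x. cos (c * x)) has_integral sin c / c) {0..1}"
proof -
  have "((\<lambda>x. cos (c * x)) has_integral (sin (c * 1) / c - sin (c * 0) / c)) {0..1}"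
  proof (rule fundamental_theorem_of_calculus[of 0 1 "\<lambda>x. sin (c * x) / c"])
    fix x :: real
    have "((\<lambda>x. sin (c * x) / c) has_real_derivative cos (c * x)) (at x)"
      using assms by (auto intro!: derivative_eq_intros)
    then show "((\<lambda>x. sin (c * x) / c) has_vector_derivative cos (c * x)) (at x within {0..1})"
      by (simp add: has_real_derivative_iff_has_vector_derivative has_vector_derivative_at_within)
  qed simp
  then show ?thesis by simp
qed

lemma phi_prod: "phi j x * phi k x = cos (((real j - real k) * pi) * x) - cos ((real (j + k) * pi) * x)"
  unfolding phi_def
  by (simp add: cos_diff cos_add algebra_simps)

lemma sin_diff_npi: "sin ((real j - real k) * pi) = 0"
  by (simp add: left_diff_distrib sin_diff)

lemma ortho:
  assumes "j \<ge> 1" "k \<ge> 1"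
  shows "inner01 (phi j) (phi k) = (if j = k then 1 else 0)"
proof -
  have 2: "((\<lambda>x. cos ((real (j + k) * pi) * x)) has_integral 0) {0..1}"
  proof -
    have "sin (real (j + k) * pi) = 0" by (rule sin_npi)
    moreover have "real (j + k) * pi \<noteq> 0" using assms by simp
    ultimately show ?thesis using int_cos[of "real (j + k) * pi"] by simp
  qed
  have 1: "((\<lambda>x. cos (((real j - real k) * pi) * x)) has_integral (if j = k then 1 else 0)) {0..1}"
  proof (cases "j = k")
    case True then show ?thesis using has_integral_const_real[of 1 0 1] by simp
  next
    case False
    then have "(real j - real k) * pi \<noteq> 0" by simp
    from int_cos[OF this] False show ?thesis by (simp add: sin_diff_npi)
  qed
  have "((\<lambda>x. phi j x * phi k x) has_integral (if j = k then 1 else 0) - 0) {0..1}"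
    unfolding phi_prod by (rule has_integral_diff[OF 1 2])
  then show ?thesis unfolding inner01_def by (simp add: integral_unique)
qed

lemma unique:
  fixes w :: "real \<Rightarrow> real"
  assumes cw: "continuous_on {0..1} w"
    and z: "\<And>k. k \<ge> 1 \<Longrightarrow> integral {0..1} (\<lambda>x. w x * phi k x) = 0"
    and w0: "w 0 = 0" and w1: "w 1 = 0"
    and x: "x \<in> {0..1}"
  shows "w x = 0"
proof -
  have cont: "continuous_on {0..1} (\<lambda>x. w x * sin (real j * pi * x) * cos (pi * x) ^ n)" for j n
    by (intro continuous_intros cw)
  have Z: "((\<lambda>x. w x * sin (real j * pi * x) * cos (pi * x) ^ n) has_integral 0) {0..1}" for n j
  proof (induction n arbitrary: j)
    case 0
    show ?case
    proof (cases "j = 0")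
      case True then show ?thesis by simp
    next
      case False
      have "((\<lambda>x. w x * phi j x) has_integral 0) {0..1}"
        using z[of j] False integrable_continuous_interval[OF continuous_on_mult[OF cw smooth_cont[OF smooth_phi]]]
        by (metis has_integral_integral less_one not_less)
      from has_integral_cmul[OF this, of "1 / sqrt 2"]
      show ?thesis by (simp add: phi_def)
    qed
  next
    case (Suc n)
    show ?case
    proof (cases "j = 0")
      case True then show ?thesis by simp
    next
      case False
      have e: "w x * sin (real j * pi * x) * cos (pi * x) ^ Suc n
        = (1/2) * (w x * sin (real (Suc j) * pi * x) * cos (pi * x) ^ n
                 + w x * sin (real (j - 1) * pi * x) * cos (pi * x) ^ n)" for x
      proof -
        have r: "real (j - 1) = real j - 1" using False by simp
        show ?thesis unfolding r
          by (simp add: sin_add sin_diff algebra_simps distrib_left distrib_right left_diff_distrib)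
      qed
      show ?thesis unfolding e
        using has_integral_cmul[OF has_integral_add[OF Suc.IH[of "Suc j"] Suc.IH[of "j - 1"]], of "1/2"]
        by simp
    qed
  qed
  define g where "g x = w x * sin (pi * x)" for x
  have cg: "continuous_on {0..1} g" unfolding g_def by (intro continuous_intros cw)
  have P: "((\<lambda>x. g x * (\<Sum>i\<le>N. c i * cos (pi * x) ^ i)) has_integral 0) {0..1}" for c N
  proof -
    have "((\<lambda>x. \<Sum>i\<le>N. c i * (w x * sin (real 1 * pi * x) * cos (pi * x) ^ i)) has_integral (\<Sum>i\<le>N. c i * 0)) {0..1}"
    proof (intro has_integral_sum)
      fix i
      show "((\<lambda>x. c i * (w x * sin (real 1 * pi * x) * cos (pi * x) ^ i)) has_integral c i * 0) {0..1}"
        using has_integral_cmul[OF Z[of 1 i], of "c i"] by simp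
    qed simp
    then show ?thesis by (simp add: g_def sum_distrib_left algebra_simps)
  qed
  define G where "G t = w (arccos t / pi) * sqrt (1 - t\<^sup>2)" for t
  have cG: "continuous_on {-1..1} G"
    unfolding G_def
  proof (intro continuous_intros)
    have "continuous_on {-1..1} (\<lambda>t. arccos t / pi)"
      by (intro continuous_intros continuous_on_arccos') auto
    moreover have "(\<lambda>t. arccos t / pi) ` {-1..1} \<subseteq> {0..1}"
      using arccos_bounded by (auto simp: field_simps)
    ultimately show "continuous_on {-1..1} (\<lambda>t. w (arccos t / pi))"
      by (rule continuous_on_compose2[OF cw])
  qed
  have Gg: "G (cos (pi * x)) = g x" if "x \<in> {0..1}" for x
  proof -
    have "arccos (cos (pi * x)) = pi * x" using that by (intro arccos_cos) auto
    moreover have "sin (pi * x) \<ge> 0" using that by (intro sin_ge_zero) auto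
    moreover have "1 - (cos (pi * x))\<^sup>2 = (sin (pi * x))\<^sup>2" by (simp add: sin_squared_eq)
    ultimately show ?thesis by (simp add: G_def g_def)
  qed
  define I where "I = integral {0..1} (\<lambda>x. g x * g x)"
  define A where "A = integral {0..1} (\<lambda>x. \<bar>g x\<bar>)"
  have A0: "A \<ge> 0" unfolding A_def
    by (intro integral_nonneg integrable_continuous_interval continuous_intros cg) auto
  have Ie: "I \<le> e * A" if "e > 0" for e
  proof -
    obtain q where q: "real_polynomial_function q" "\<And>t. t \<in> {-1..1} \<Longrightarrow> \<bar>G t - q t\<bar> < e"
      using Stone_Weierstrass_real_polynomial_function[OF compact_Icc cG \<open>e > 0\<close>] by blast
    obtain c N where qe: "q = (\<lambda>t. \<Sum>i\<le>N. c i * t ^ i)"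
      using q(1) real_polynomial_function_iff_sum by blast
    have cq: "continuous_on {0..1} (\<lambda>x. g x * q (cos (pi * x)))"
      unfolding qe by (intro continuous_intros cg)
    have i0: "integral {0..1} (\<lambda>x. g x * q (cos (pi * x))) = 0"
      using P[of c N] unfolding qe by (simp add: integral_unique)
    have "I = integral {0..1} (\<lambda>x. g x * g x - g x * q (cos (pi * x)))"
      unfolding I_def
      by (subst integral_diff) (auto intro!: integrable_continuous_interval continuous_intros cg cq simp: i0)
    also have "\<dots> \<le> integral {0..1} (\<lambda>x. \<bar>g x\<bar> * e)"
    proof (rule integral_le[OF _ _ ], goal_cases)
      case 1 show ?case by (intro integrable_continuous_interval continuous_intros cg cq)
      case 2 show ?case by (intro integrable_continuous_interval continuous_intros cg)
      case (3 x)
      have "cos (pi * x) \<in> {-1..1}" by simp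
      from q(2)[OF this] Gg[OF 3]
      have "\<bar>g x - q (cos (pi * x))\<bar> \<le> e" by simp
      then have "\<bar>g x\<bar> * \<bar>g x - q (cos (pi * x))\<bar> \<le> \<bar>g x\<bar> * e"
        by (intro mult_left_mono) auto
      then show ?case by (simp add: abs_mult[symmetric] right_diff_distrib[symmetric])
    qed
    also have "\<dots> = e * A" unfolding A_def by (simp add: mult.commute)
    finally show ?thesis .
  qed
  have "I \<le> 0"
  proof (rule field_le_epsilon)
    fix e :: real assume "e > 0"
    then have "I \<le> (e / (A + 1)) * A" using Ie[of "e / (A + 1)"] A0 by simp
    also have "\<dots> \<le> e" using A0 \<open>e > 0\<close> by (simp add: field_simps)
    finally show "I \<le> 0 + e" by simp
  qed
  moreover have "I \<ge> 0" unfolding I_def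
    by (intro integral_nonneg integrable_continuous_interval continuous_intros cg) auto
  ultimately have "I = 0" by simp
  moreover have cgg: "continuous_on {0..1} (\<lambda>x. g x * g x)" by (intro continuous_intros cg)
  have "integral {0..1} (\<lambda>x. g x * g x) = 0 \<longleftrightarrow> (\<forall>x\<in>{0..1}. g x * g x = 0)"
    by (rule integral_eq_0_iff[OF cgg]) auto
  ultimately have "\<forall>x\<in>{0..1}. g x * g x = 0" unfolding I_def by blast
  then have gx: "g x = 0" using x by simp
  show ?thesis
  proof (cases "x = 0 \<or> x = 1")
    case True then show ?thesis using w0 w1 by auto
  next
    case False
    then have "sin (pi * x) > 0" using x by (intro sin_gt_zero) auto
    then show ?thesis using gx by (simp add: g_def)
  qed
qed




lemma phi_bound: "\<bar>phi j x\<bar> \<le> sqrt 2"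
  unfolding phi_def by (simp add: abs_mult)

lemma series_int:
  fixes \<alpha> M :: "nat \<Rightarrow> real" and h :: "real \<Rightarrow> real"
  assumes bnd: "\<And>i. \<bar>\<alpha> i\<bar> \<le> M i" and sM: "summable M" and ch: "continuous_on {0..1} h"
  shows "(\<lambda>i. \<alpha> i * inner01 (phi (Suc i)) h) sums integral {0..1} (\<lambda>x. suminf (\<lambda>i. \<alpha> i * phi (Suc i) x) * h x)"
    and "continuous_on {0..1} (\<lambda>x. suminf (\<lambda>i. \<alpha> i * phi (Suc i) x))"
proof -
  obtain B where B: "\<And>x. x \<in> {0..1} \<Longrightarrow> \<bar>h x\<bar> \<le> B"
    using compact_imp_bounded[OF compact_continuous_image[OF ch compact_Icc]]
    unfolding bounded_iff by force
  have M0: "M i \<ge> 0" for i using bnd[of i] by simp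
  have sab: "summable (\<lambda>i. \<alpha> i * phi (Suc i) x)" for x :: real
  proof (rule summable_comparison_test'[OF summable_mult2[OF sM, of "sqrt 2"]])
    fix n :: nat show "norm (\<alpha> n * phi (Suc n) x) \<le> M n * sqrt 2"
      unfolding real_norm_def abs_mult by (intro mult_mono bnd phi_bound) (auto simp: M0)
  qed
  have cf: "continuous_on {0..1} (\<lambda>x. \<Sum>i<n. \<alpha> i * phi (Suc i) x * g x)" if "continuous_on {0..1} g" for n and g :: "real \<Rightarrow> real"
    by (intro continuous_intros smooth_cont[OF smooth_phi] that)
  have ul: "uniform_limit {0..1} (\<lambda>n x. \<Sum>i<n. \<alpha> i * phi (Suc i) x * g x) (\<lambda>x. suminf (\<lambda>i. \<alpha> i * phi (Suc i) x * g x)) sequentially"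
    if "\<And>x. x \<in> {0..1} \<Longrightarrow> \<bar>g x\<bar> \<le> B'" for g :: "real \<Rightarrow> real" and B'
  proof (rule Weierstrass_m_test[where M = "\<lambda>i. M i * sqrt 2 * B'"])
    fix n and x :: real assume x: "x \<in> {0..1}"
    have "\<bar>\<alpha> n * phi (Suc n) x\<bar> \<le> M n * sqrt 2"
      unfolding abs_mult by (intro mult_mono bnd phi_bound) (auto simp: M0)
    then show "norm (\<alpha> n * phi (Suc n) x * g x) \<le> M n * sqrt 2 * B'"
      unfolding real_norm_def abs_mult[of _ "g x"] by (intro mult_mono that x) auto
  next
    show "summable (\<lambda>i. M i * sqrt 2 * B')" by (intro summable_mult2 sM)
  qed
  have e: "suminf (\<lambda>i. \<alpha> i * phi (Suc i) x * g x) = suminf (\<lambda>i. \<alpha> i * phi (Suc i) x) * g x" for x :: real and g :: "real \<Rightarrow> real"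
    using suminf_mult2[OF sab[of x], of "g x"] by simp
  show "continuous_on {0..1} (\<lambda>x. suminf (\<lambda>i. \<alpha> i * phi (Suc i) x))"
    using uniform_limit_theorem[OF _ ul[of "\<lambda>x. 1" 1]] cf[of "\<lambda>x. 1"] by simp
  obtain I J where I: "\<And>n. ((\<lambda>x. \<Sum>i<n. \<alpha> i * phi (Suc i) x * h x) has_integral I n) {0..1}"
    and J: "((\<lambda>x. suminf (\<lambda>i. \<alpha> i * phi (Suc i) x * h x)) has_integral J) {0..1}"
    and lim: "I \<longlonglongrightarrow> J"
    using uniform_limit_integral[OF ul[of h B, OF B] cf[OF ch]] by auto
  have In: "I n = (\<Sum>i<n. \<alpha> i * inner01 (phi (Suc i)) h)" for n
  proof -
    have "((\<lambda>x. \<Sum>i<n. \<alpha> i * phi (Suc i) x * h x) has_integral (\<Sum>i<n. \<alpha> i * inner01 (phi (Suc i)) h)) {0..1}"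
    proof (intro has_integral_sum)
      fix i
      have "((\<lambda>x. phi (Suc i) x * h x) has_integral inner01 (phi (Suc i)) h) {0..1}"
        unfolding inner01_def
        by (intro integrable_integral integrable_continuous_interval continuous_intros smooth_cont[OF smooth_phi] ch)
      from has_integral_cmul[OF this, of "\<alpha> i"]
      show "((\<lambda>x. \<alpha> i * phi (Suc i) x * h x) has_integral \<alpha> i * inner01 (phi (Suc i)) h) {0..1}"
        by (simp add: mult.assoc)
    qed simp
    then show ?thesis using I[of n] by (rule has_integral_unique[symmetric])
  qed
  have "J = integral {0..1} (\<lambda>x. suminf (\<lambda>i. \<alpha> i * phi (Suc i) x) * h x)"
    using J unfolding e by (simp add: integral_unique)
  then show "(\<lambda>i. \<alpha> i * inner01 (phi (Suc i)) h) sums integral {0..1} (\<lambda>x. suminf (\<lambda>i. \<alpha> i * phi (Suc i) x) * h x)"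
    using lim unfolding sums_def In[symmetric] by simp
qed

lemma parseval:
  fixes u v :: "real \<Rightarrow> real" and a b :: real
  assumes u: "smooth u" and uv: "\<And>x. x \<notin> {a..b} \<Longrightarrow> u x = 0" and ab: "0 < a" "b < 1"
    and cv: "continuous_on {0..1} v"
  shows "(\<lambda>i. inner01 u (phi (Suc i)) * inner01 v (phi (Suc i))) sums inner01 u v"
proof -
  define \<alpha> where "\<alpha> i = inner01 u (phi (Suc i))" for i
  define C where "C = sqrt 2 * integral {0..1} (\<lambda>x. \<bar>lapA u x\<bar>)"
  define M where "M i = C * inverse (real (Suc i) ^ 2)" for i
  have clu: "continuous_on {0..1} (lapA u)" by (rule smooth_cont[OF smooth_lapA[OF u]])
  have C0: "C \<ge> 0" unfolding C_def
    by (intro mult_nonneg_nonneg integral_nonneg integrable_continuous_interval continuous_intros clu) auto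
  have bnd: "\<bar>\<alpha> i\<bar> \<le> M i" for i
  proof -
    have "inner01 (lapA u) (phi (Suc i)) = inner01 u (lapA (phi (Suc i)))"
      by (rule ibp[OF u smooth_phi uv ab])
    also have "\<dots> = lam (Suc i) * \<alpha> i"
      unfolding lapA_phi \<alpha>_def by (rule inner01_scale_right)
    finally have eq: "lam (Suc i) * \<alpha> i = inner01 (lapA u) (phi (Suc i))" by simp
    have "\<bar>inner01 (lapA u) (phi (Suc i))\<bar> \<le> integral {0..1} (\<lambda>x. \<bar>lapA u x\<bar> * sqrt 2)"
      unfolding inner01_def
      using integral_norm_bound_integral[of "\<lambda>x. lapA u x * phi (Suc i) x" "{0..1}" "\<lambda>x. \<bar>lapA u x\<bar> * sqrt 2"]
      by (simp add: abs_mult mult_left_mono phi_bound integrable_continuous_interval continuous_intros clu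
            smooth_cont[OF smooth_phi])
    also have "\<dots> = C" unfolding C_def by (simp add: mult.commute)
    finally have le: "\<bar>lam (Suc i) * \<alpha> i\<bar> \<le> C" unfolding eq .
    have pi1: "pi\<^sup>2 \<ge> 1" using pi_gt3 by (simp add: power2_eq_square) (smt (verit) mult_le_cancel_right1)
    have lg: "lam (Suc i) \<ge> real (Suc i) ^ 2" unfolding lam_def power_mult_distrib
      using mult_left_mono[OF pi1, of "real (Suc i) ^ 2"] by simp
    have pos: "real (Suc i) ^ 2 > 0" by simp
    have "\<bar>\<alpha> i\<bar> * real (Suc i) ^ 2 \<le> \<bar>\<alpha> i\<bar> * lam (Suc i)"
      by (intro mult_left_mono lg) auto
    also have "\<dots> \<le> C" using le lg pos by (simp add: abs_mult mult.commute)
    finally have "\<bar>\<alpha> i\<bar> * real (Suc i) ^ 2 \<le> C" .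
    then show ?thesis unfolding M_def using pos by (simp add: field_simps)
  qed
  have sM: "summable M"
  proof -
    have "summable (\<lambda>n. inverse (real n ^ 2))" by (rule inverse_power_summable) simp
    then have "summable (\<lambda>n. inverse (real (Suc n) ^ 2))" by (subst summable_Suc_iff)
    then show ?thesis unfolding M_def by (rule summable_mult)
  qed
  define S where "S x = suminf (\<lambda>i. \<alpha> i * phi (Suc i) x)" for x
  have cS: "continuous_on {0..1} S" unfolding S_def[abs_def] by (rule series_int(2)[OF bnd sM cv])
  have coef: "inner01 S (phi k) = inner01 u (phi k)" if k: "k \<ge> 1" for k
  proof -
    have 1: "(\<lambda>i. \<alpha> i * inner01 (phi (Suc i)) (phi k)) sums inner01 S (phi k)"
      using series_int(1)[OF bnd sM smooth_cont[OF smooth_phi]] unfolding inner01_def S_def .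
    have "(\<lambda>i. \<alpha> i * inner01 (phi (Suc i)) (phi k)) = (\<lambda>i. if i = k - 1 then \<alpha> i else 0)"
      using k by (intro ext) (auto simp: ortho)
    then have "(\<lambda>i. \<alpha> i * inner01 (phi (Suc i)) (phi k)) sums \<alpha> (k - 1)"
      using sums_single[of "k - 1" \<alpha>] by simp
    with 1 have "inner01 S (phi k) = \<alpha> (k - 1)" using sums_unique2 by blast
    then show ?thesis using k by (simp add: \<alpha>_def)
  qed
  have cu: "continuous_on {0..1} u" by (rule smooth_cont[OF u])
  have wz: "u x - S x = 0" if x: "x \<in> {0..1}" for x
  proof (rule unique[of "\<lambda>x. u x - S x", OF _ _ _ _ x])
    show "continuous_on {0..1} (\<lambda>x. u x - S x)" by (intro continuous_intros cu cS)
    fix k :: nat assume k: "k \<ge> 1"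
    have "integral {0..1} (\<lambda>x. (u x - S x) * phi k x) = inner01 u (phi k) - inner01 S (phi k)"
      unfolding inner01_def left_diff_distrib
      by (intro integral_diff integrable_continuous_interval continuous_intros cu cS smooth_cont[OF smooth_phi])
    then show "integral {0..1} (\<lambda>x. (u x - S x) * phi k x) = 0" using coef[OF k] by simp
  next
    have "phi j 0 = 0" for j by (simp add: phi_def)
    moreover have "u 0 = 0" using uv ab by simp
    ultimately show "u 0 - S 0 = 0" by (simp add: S_def)
  next
    have "phi j 1 = 0" for j by (simp add: phi_def)
    moreover have "u 1 = 0" using uv ab by simp
    ultimately show "u 1 - S 1 = 0" by (simp add: S_def)
  qed
  have "inner01 u v = integral {0..1} (\<lambda>x. S x * v x)"
    unfolding inner01_def using wz by (intro integral_cong) auto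
  moreover have "(\<lambda>i. \<alpha> i * inner01 (phi (Suc i)) v) sums integral {0..1} (\<lambda>x. S x * v x)"
    using series_int(1)[OF bnd sM cv] unfolding S_def .
  ultimately show ?thesis unfolding \<alpha>_def by (simp add: inner01_commute[of v])
qed




lemma m1sq: "(-1::real)^q * (-1)^q = 1"
  by (simp add: power_add[symmetric])

lemma alg:
  fixes L l1 lK m1 mK :: real
  shows "(-1::real)^q * ((L - (l1 + lK)/2) * (lK - L)^q * (L - l1)^q * (m1*mK))
    = ((L - l1)^Suc q * m1 * ((L - lK)^q * mK) + (L - l1)^q * m1 * ((L - lK)^Suc q * mK)) / 2"
proof -
  have "(lK - L)^q = (-1)^q * (L - lK)^q"
    by (metis minus_diff_eq power_minus)
  then have "(-1::real)^q * ((L - (l1 + lK)/2) * (lK - L)^q * (L - l1)^q * (m1*mK))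
     = ((-1)^q * (-1)^q) * ((L - (l1 + lK)/2) * (L - lK)^q * (L - l1)^q * (m1*mK))"
    by (simp add: algebra_simps)
  also have "\<dots> = (L - (l1 + lK)/2) * (L - lK)^q * (L - l1)^q * (m1*mK)" by (simp only: m1sq mult_1)
  also have "\<dots> = ((L - l1)^Suc q * m1 * ((L - lK)^q * mK) + (L - l1)^q * m1 * ((L - lK)^Suc q * mK)) / 2"
    by (simp add: field_simps)
  finally show ?thesis .
qed

theorem propositionA2:
  fixes K p :: nat and \<mu> :: "real \<Rightarrow> real"
  assumes "K \<ge> 1" and "p \<ge> 1" and "smooth_compact_01 \<mu>"
  shows "AKp K p \<mu> =
    (-1) ^ (p - 1) / 2 * inner01 (comm (adA (p - 1) \<mu>) (adA p \<mu>) (phi 1)) (phi K)"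
proof -
  obtain a b where ab: "0 < a" "a \<le> b" "b < 1" and V: "\<And>x. x \<notin> {a..b} \<Longrightarrow> \<mu> x = 0"
    using assms(3) unfolding smooth_compact_01_def by blast
  interpret M: mu_ctx \<mu> a b
    using smooth_mu[OF assms(3)] V ab by unfold_locales auto
  obtain q where pq: "p = Suc q" using assms(2) by (cases p) auto
  let ?X = "adA q \<mu>" and ?Y = "adA (Suc q) \<mu>"
  have sp: "smooth (phi n)" for n by (rule smooth_phi)
  define m1 where "m1 j = inner01 (mult_op \<mu> (phi 1)) (phi j)" for j
  define mK where "mK j = inner01 (mult_op \<mu> (phi K)) (phi j)" for j
  define L where "L j = lam j" for j
  define f1 where "f1 i = (lam (Suc i) - lam 1)^Suc q * m1 (Suc i) * ((lam (Suc i) - lam K)^q * mK (Suc i))" for i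
  define f2 where "f2 i = (lam (Suc i) - lam 1)^q * m1 (Suc i) * ((lam (Suc i) - lam K)^Suc q * mK (Suc i))" for i
  define P1 where "P1 = inner01 (?Y (phi 1)) (?X (phi K))"
  define P2 where "P2 = inner01 (?X (phi 1)) (?Y (phi K))"
  have s1: "f1 sums P1"
  proof -
    have "(\<lambda>i. inner01 (?Y (phi 1)) (phi (Suc i)) * inner01 (?X (phi K)) (phi (Suc i))) sums P1"
      unfolding P1_def
      by (rule parseval[OF M.adS[OF sp] M.adV[OF sp] ab(1,3) smooth_cont[OF M.adS[OF sp]]])
    then show ?thesis unfolding f1_def m1_def mK_def M.matrix .
  qed
  have s2: "f2 sums P2"
  proof -
    have "(\<lambda>i. inner01 (?X (phi 1)) (phi (Suc i)) * inner01 (?Y (phi K)) (phi (Suc i))) sums P2"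
      unfolding P2_def
      by (rule parseval[OF M.adS[OF sp] M.adV[OF sp] ab(1,3) smooth_cont[OF M.adS[OF sp]]])
    then show ?thesis unfolding f2_def m1_def mK_def M.matrix .
  qed
  have "inner01 (comm ?X ?Y (phi 1)) (phi K) = inner01 (?X (?Y (phi 1))) (phi K) - inner01 (?Y (?X (phi 1))) (phi K)"
    unfolding comm_def by (intro inner01_diff_left M.adS sp)
  also have "\<dots> = (-1)^q * P1 - (-1)^Suc q * P2"
    unfolding P1_def P2_def by (simp only: M.adjoint[OF M.adS[OF sp] sp] M.adjoint[OF M.adS[OF sp] sp])
  also have "\<dots> = (-1)^q * (P1 + P2)" by (simp add: algebra_simps)
  finally have R: "inner01 (comm ?X ?Y (phi 1)) (phi K) = (-1)^q * (P1 + P2)" .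
  have g: "(\<lambda>i. let j = Suc i in
        (lam j - (lam 1 + lam K) / 2) * (lam K - lam j) ^ q * (lam j - lam 1) ^ q * coefc \<mu> K j)
     = (\<lambda>i. (-1)^q * ((f1 i + f2 i) / 2))"
  proof
    fix i
    have "(-1)^q * (let j = Suc i in
        (lam j - (lam 1 + lam K) / 2) * (lam K - lam j) ^ q * (lam j - lam 1) ^ q * coefc \<mu> K j)
        = (f1 i + f2 i) / 2"
      unfolding Let_def f1_def f2_def coefc_def m1_def mK_def
      by (rule alg)
    then show "(let j = Suc i in
        (lam j - (lam 1 + lam K) / 2) * (lam K - lam j) ^ q * (lam j - lam 1) ^ q * coefc \<mu> K j)
        = (-1)^q * ((f1 i + f2 i) / 2)"
      by (metis (no_types, lifting) m1sq mult.assoc mult_1)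
  qed
  have "(\<lambda>i. (-1)^q * ((f1 i + f2 i) / 2)) sums ((-1)^q * ((P1 + P2) / 2))"
    by (intro sums_mult sums_divide sums_add s1 s2)
  then have su: "suminf (\<lambda>i. (-1)^q * ((f1 i + f2 i) / 2)) = (-1)^q * ((P1 + P2) / 2)"
    by (rule sums_unique[symmetric])
  have "AKp K p \<mu> = (-1)^q * suminf (\<lambda>i. let j = Suc i in
        (lam j - (lam 1 + lam K) / 2) * (lam K - lam j) ^ q * (lam j - lam 1) ^ q * coefc \<mu> K j)"
    unfolding AKp_def pq by (simp only: diff_Suc_1)
  also have "\<dots> = (-1)^q * ((-1)^q * ((P1 + P2) / 2))" unfolding g su ..
  also have "\<dots> = (P1 + P2) / 2" by (simp add: mult.assoc[symmetric] m1sq)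
  finally have AK: "AKp K p \<mu> = (P1 + P2) / 2" .
  have "(-1) ^ (p - 1) / 2 * inner01 (comm (adA (p - 1) \<mu>) (adA p \<mu>) (phi 1)) (phi K)
      = (-1)^q / 2 * ((-1)^q * (P1 + P2))" unfolding pq diff_Suc_1 R ..
  also have "\<dots> = ((-1)^q * (-1)^q) * (P1 + P2) / 2" by simp
  also have "\<dots> = (P1 + P2) / 2" by (simp only: m1sq mult_1)
  finally show ?thesis using AK by simp
qed


end
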